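(* Let $0<\delta_0<\pi/2$. Then $G(r,t)<\ln(7/6)$ for all $r\in[0,\pi+\delta_0)$ and all $t\ge0$. More precisely, $G(r,t)<\ln\bigl(\tfrac{2r_M\sin r_M}{\pi}\bigr)<\ln(7/6)$, where $r_M\in(\pi/2,\pi)$ is the solution of $r_M=-\tan r_M$.
   Context: Let $f(r)=-\dfrac{r\cos r\sin r}{r+\cos r\sin r}$ and $g(r)=-\dfrac{\cos r\,(r\cos r+\sin r)}{r+\cos r\sin r}$ (extended continuously at $r=0$). Let $F(r,t)$ denote the flow of the one-dimensional vector field $f(r)\partial_r$, i.e.\ the solution of $\partial_tF(r,t)=f(F(r,t))$, $F(r,0)=r$. Define $G(r,t)=\int_0^t g(F(r,s))\,ds$. *)

theory Defs
  imports "HOL-Analysis.Analysis"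
begin

text \<open>The vector field coefficient f, extended continuously at 0 (value 0).\<close>
definition f_vf :: "real \<Rightarrow> real" where
  "f_vf r = (if r = 0 then 0 else - (r * cos r * sin r) / (r + cos r * sin r))"

text \<open>The function g, extended continuously at 0 (value -1).\<close>
definition g_fn :: "real \<Rightarrow> real" where
  "g_fn r = (if r = 0 then -1 else - (cos r * (r * cos r + sin r)) / (r + cos r * sin r))"

text \<open>The flow F of f: F r is the (unique, global) solution of the ODE
  phi' = f(phi) with phi 0 = r.\<close>
definition flow_F :: "real \<Rightarrow> real \<Rightarrow> real" where
  "flow_F r t = (THE phi. phi 0 = r \<and>
      (\<forall>s. (phi has_real_derivative f_vf (phi s)) (at s))) t"

definition G_fn :: "real \<Rightarrow> real \<Rightarrow> real" where
  "G_fn r t = integral {0..t} (\<lambda>s. g_fn (flow_F r s))"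

definition r_M :: real where
  "r_M = (THE x. x \<in> {pi/2<..<pi} \<and> x = - tan x)"

end

theory Submission
  imports Defs
begin

definition sinc :: "real \<Rightarrow> real" where
  "sinc x = (if x = 0 then 1 else sin x / x)"

lemma sinc_even: "sinc (-x) = sinc x"
  by (simp add: sinc_def)

lemma abs_sinc_le: "\<bar>sinc x\<bar> \<le> 1"
  using abs_sin_x_le_abs_x[of x] by (auto simp: sinc_def abs_divide divide_le_eq_1)

lemma sinc_pos_small: assumes "0 < x" "x < pi" shows "sinc x > 0"
  using assms sin_gt_zero[of x] by (simp add: sinc_def)

lemma sinc_ge: "sinc x \<ge> -1/2"
proof (cases "\<bar>x\<bar> \<ge> 2")
  case True
  hence "\<bar>sinc x\<bar> \<le> 1/2"
  proof -
    have "\<bar>sin x\<bar> * 2 \<le> \<bar>x\<bar>" using abs_sin_le_one[of x] True by linarith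
    then show ?thesis using True by (auto simp: sinc_def abs_divide divide_le_eq)
  qed
  then show ?thesis by linarith
next
  case False
  have p3: "pi > 3" using pi_gt3 .
  show ?thesis
  proof (cases "x = 0")
    case True then show ?thesis by (simp add: sinc_def)
  next
    case x0: False
    show ?thesis
    proof (cases "x > 0")
      case True then show ?thesis using sinc_pos_small[of x] False p3 by auto
    next
      case xn: False
      then have "sinc (-x) > 0" using sinc_pos_small[of "-x"] False p3 x0 by auto
      then show ?thesis by (simp add: sinc_even)
    qed
  qed
qed

lemma kbound_pos: fixes x :: real assumes "0 \<le> x" shows "\<bar>x * cos x - sin x\<bar> \<le> x\<^sup>2"
proof -
  have d1: "DERIV (\<lambda>y. y\<^sup>2 - (y * cos y - sin y)) y :> 2*y + y * sin y" for y :: real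
    by (auto intro!: derivative_eq_intros simp: power2_eq_square algebra_simps)
  have d2: "DERIV (\<lambda>y. y\<^sup>2 + (y * cos y - sin y)) y :> 2*y - y * sin y" for y :: real
    by (auto intro!: derivative_eq_intros simp: power2_eq_square algebra_simps)
  have a: "0 \<le> 2*y + y * sin y" if "0 \<le> y" for y :: real
  proof -
    have "y * (-1) \<le> y * sin y" using that by (intro mult_left_mono) auto
    thus ?thesis using that by linarith
  qed
  have b: "0 \<le> 2*y - y * sin y" if "0 \<le> y" for y :: real
  proof -
    have "sin y \<le> 1" by simp
    hence "y * sin y \<le> y * 1" using that by (rule mult_left_mono)
    thus ?thesis using that by linarith
  qed
  have "(\<lambda>y. y\<^sup>2 - (y * cos y - sin y)) 0 \<le> (\<lambda>y. y\<^sup>2 - (y * cos y - sin y)) x"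
    using assms by (intro DERIV_nonneg_imp_nondecreasing[OF assms]) (use d1 a in blast)
  moreover have "(\<lambda>y. y\<^sup>2 + (y * cos y - sin y)) 0 \<le> (\<lambda>y. y\<^sup>2 + (y * cos y - sin y)) x"
    using assms by (intro DERIV_nonneg_imp_nondecreasing[OF assms]) (use d2 b in blast)
  ultimately show ?thesis by (simp add: abs_le_iff)
qed

lemma kbound: fixes x :: real shows "\<bar>x * cos x - sin x\<bar> \<le> x\<^sup>2"
proof (cases "x \<ge> 0")
  case True then show ?thesis by (rule kbound_pos)
next
  case False
  have "\<bar>(-x) * cos (-x) - sin (-x)\<bar> \<le> (-x)\<^sup>2" by (intro kbound_pos) (use False in auto)
  then show ?thesis by simp
qed

lemma sinc_deriv: assumes "x \<noteq> 0"
  shows "DERIV sinc x :> (x * cos x - sin x) / x\<^sup>2"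
proof -
  have "DERIV (\<lambda>y. sin y / y) x :> (x * cos x - sin x) / x\<^sup>2"
    using assms by (auto intro!: derivative_eq_intros simp: power2_eq_square field_simps)
  moreover have "open (-{0::real})" by auto
  ultimately show ?thesis
    by (rule has_field_derivative_transform_within_open) (use assms in \<open>auto simp: sinc_def\<close>)
qed

lemma sinc_deriv_bound: fixes x :: real assumes "x \<noteq> 0" shows "\<bar>(x * cos x - sin x) / x\<^sup>2\<bar> \<le> 1"
proof -
  have "x\<^sup>2 > 0" using assms by simp
  then show ?thesis using kbound[of x] by (simp add: abs_divide)
qed

lemma isCont_sinc: "isCont sinc x"
proof (cases "x = 0")
  case False
  then show ?thesis using sinc_deriv DERIV_isCont by blast
next
  case True
  have "((\<lambda>h::real. (sin (0 + h) - sin 0) / h) \<longlongrightarrow> 1) (at 0)"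
    using DERIV_sin[of 0] unfolding DERIV_def by simp
  hence "((\<lambda>h::real. sin h / h) \<longlongrightarrow> 1) (at 0)" by simp
  hence "(sinc \<longlongrightarrow> 1) (at 0)"
    by (rule Lim_transform_within[where d=1]) (auto simp: sinc_def)
  then show ?thesis using True by (simp add: isCont_def sinc_def)
qed

lemma sinc_lip_nonneg: assumes "0 \<le> x" "x \<le> y" shows "\<bar>sinc y - sinc x\<bar> \<le> y - x"
proof (cases "x = y")
  case True then show ?thesis by simp
next
  case False
  hence xy: "x < y" using assms by simp
  obtain l z where z: "x < z" "z < y" "DERIV sinc z :> l" "sinc y - sinc x = (y - x) * l"
    using MVT[OF xy, of sinc] isCont_sinc
    by (metis continuous_at_imp_continuous_on real_differentiable_def sinc_deriv assms(1) less_le_trans order.strict_iff_not)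
  have "z \<noteq> 0" using z assms by auto
  hence "l = (z * cos z - sin z) / z\<^sup>2" using z(3) sinc_deriv DERIV_unique by blast
  hence "\<bar>l\<bar> \<le> 1" using sinc_deriv_bound \<open>z \<noteq> 0\<close> by simp
  then show ?thesis using z(4) xy by (simp add: abs_mult)
qed

lemma sinc_lip: "\<bar>sinc y - sinc x\<bar> \<le> \<bar>y - x\<bar>"
proof -
  have nn: "\<bar>sinc y - sinc x\<bar> \<le> \<bar>y - x\<bar>" if "0 \<le> x" "0 \<le> y" for x y
    using sinc_lip_nonneg[of x y] sinc_lip_nonneg[of y x] that by (cases "x \<le> y") auto
  have nn2: "\<bar>sinc y - sinc x\<bar> \<le> \<bar>y - x\<bar>" if "x \<le> 0" "y \<le> 0" for x y
    using nn[of "-x" "-y"] that by (simp add: sinc_even)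
  consider "0 \<le> x" "0 \<le> y" | "x \<le> 0" "y \<le> 0" | "x < 0" "0 < y" | "y < 0" "0 < x" by linarith
  then show ?thesis
  proof cases
    case 1 then show ?thesis by (rule nn)
  next
    case 2 then show ?thesis by (rule nn2)
  next
    case 3
    have "\<bar>sinc y - sinc 0\<bar> \<le> \<bar>y - 0\<bar>" using 3 by (intro nn) auto
    moreover have "\<bar>sinc 0 - sinc x\<bar> \<le> \<bar>0 - x\<bar>" using 3 by (intro nn2) auto
    ultimately show ?thesis using 3 by linarith
  next
    case 4
    have "\<bar>sinc x - sinc 0\<bar> \<le> \<bar>x - 0\<bar>" using 4 by (intro nn) auto
    moreover have "\<bar>sinc 0 - sinc y\<bar> \<le> \<bar>0 - y\<bar>" using 4 by (intro nn2) auto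
    ultimately show ?thesis using 4 by linarith
  qed
qed


definition Qf :: "real \<Rightarrow> real" where
  "Qf r = sinc (2*r) / (1 + sinc (2*r))"

lemma one_sinc_pos: "1 + sinc x \<ge> 1/2"
  using sinc_ge[of x] by linarith

lemma sinc_2r: "r \<noteq> 0 \<Longrightarrow> sinc (2*r) = sin r * cos r / r"
  by (simp add: sinc_def sin_double)

lemma Dpos_aux: "r + cos r * sin r = r * (1 + sinc (2*r))"
proof (cases "r = 0")
  case True then show ?thesis by (simp add: sinc_def)
next
  case False
  have "sinc (2*r) = sin r * cos r / r" by (rule sinc_2r[OF False])
  then show ?thesis using False by (simp add: distrib_left mult.commute)
qed

lemma D_pos: assumes "(r::real) > 0" shows "r + cos r * sin r > 0"
proof -
  have "1 + sinc (2*r) > 0" using one_sinc_pos[of "2*r"] by linarith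
  then show ?thesis unfolding Dpos_aux using assms by simp
qed

lemma D_neg: assumes "(r::real) < 0" shows "r + cos r * sin r < 0"
proof -
  have "1 + sinc (2*r) > 0" using one_sinc_pos[of "2*r"] by linarith
  then show ?thesis unfolding Dpos_aux by (rule mult_neg_pos[OF assms])
qed

lemma D_nz: assumes "(r::real) \<noteq> 0" shows "r + cos r * sin r \<noteq> 0"
proof (cases "r > 0")
  case True show ?thesis using D_pos[OF True] by linarith
next
  case False
  hence "r < 0" using assms by linarith
  show ?thesis using D_neg[OF \<open>r < 0\<close>] by linarith
qed

lemma f_vf_Q: "f_vf r = - r * Qf r"
proof (cases "r = 0")
  case True then show ?thesis by (simp add: f_vf_def)
next
  case False
  have d: "r + cos r * sin r \<noteq> 0" using D_nz[OF False] .
  have "1 + sinc (2*r) \<noteq> 0" using one_sinc_pos[of "2*r"] by linarith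
  then have "Qf r = (sin r * cos r / r) / (1 + sin r * cos r / r)"
    unfolding Qf_def sinc_2r[OF False] by simp
  also have "\<dots> = cos r * sin r / (r + cos r * sin r)"
    using False d by (simp add: field_simps)
  finally show ?thesis using False by (simp add: f_vf_def)
qed

lemma f_vf_fun: "f_vf = (\<lambda>r. - r * Qf r)"
  using f_vf_Q by auto

lemma Qf_bound: "\<bar>Qf r\<bar> \<le> 1"
proof -
  define s where "s = sinc (2*r)"
  have s1: "s \<ge> -1/2" "\<bar>s\<bar> \<le> 1" unfolding s_def using sinc_ge abs_sinc_le by auto
  have "\<bar>s\<bar> \<le> 1 + s \<or> s \<ge> 0" using s1 by auto
  moreover have "1 + s > 0" using s1 by linarith
  ultimately have "\<bar>s\<bar> \<le> \<bar>1 + s\<bar>" using s1 by auto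
  then show ?thesis unfolding Qf_def s_def[symmetric] using \<open>1 + s > 0\<close>
    by (simp add: abs_divide divide_le_eq_1)
qed

lemma Qf_lip: "\<bar>Qf a - Qf b\<bar> \<le> 8 * \<bar>a - b\<bar>"
proof -
  define x where "x = sinc (2*a)"
  define y where "y = sinc (2*b)"
  have x1: "1 + x \<ge> 1/2" and y1: "1 + y \<ge> 1/2" unfolding x_def y_def using one_sinc_pos by auto
  have e: "2*a - 2*b = 2*(a-b)" by simp
  have lip: "\<bar>x - y\<bar> \<le> 2 * \<bar>a - b\<bar>" unfolding x_def y_def using sinc_lip[of "2*a" "2*b"] unfolding e abs_mult by simp
  have nz: "1 + x \<noteq> 0" "1 + y \<noteq> 0" using x1 y1 by auto
  have num: "x * (1 + y) - y * (1 + x) = x - y" by (simp add: algebra_simps)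
  have "Qf a - Qf b = (x * (1 + y) - y * (1 + x)) / ((1 + x) * (1 + y))"
    unfolding Qf_def x_def[symmetric] y_def[symmetric] by (rule diff_frac_eq[OF nz])
  hence "Qf a - Qf b = (x - y) / ((1 + x) * (1 + y))" unfolding num .
  moreover have "(1 + x) * (1 + y) \<ge> 1/4"
  proof -
    have "(1/2) * (1/2) \<le> (1 + x) * (1 + y)" using x1 y1 by (intro mult_mono) auto
    then show ?thesis by simp
  qed
  ultimately have "\<bar>Qf a - Qf b\<bar> = \<bar>x - y\<bar> / ((1 + x) * (1 + y))" by (simp add: abs_divide)
  also have "\<dots> \<le> \<bar>x - y\<bar> / (1/4)"
    using \<open>(1 + x) * (1 + y) \<ge> 1/4\<close> by (intro divide_left_mono) auto
  also have "\<dots> \<le> 8 * \<bar>a - b\<bar>" using lip by simp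
  finally show ?thesis .
qed

lemma f_lip: assumes "\<bar>b\<bar> \<le> M" shows "\<bar>f_vf a - f_vf b\<bar> \<le> (1 + 8 * M) * \<bar>a - b\<bar>"
proof -
  have "f_vf a - f_vf b = - ((a - b) * Qf a + b * (Qf a - Qf b))"
    unfolding f_vf_Q by (simp add: algebra_simps)
  hence "\<bar>f_vf a - f_vf b\<bar> = \<bar>(a - b) * Qf a + b * (Qf a - Qf b)\<bar>" by simp
  also have "\<dots> \<le> \<bar>(a - b) * Qf a\<bar> + \<bar>b * (Qf a - Qf b)\<bar>" by (rule abs_triangle_ineq)
  also have "\<dots> = \<bar>a - b\<bar> * \<bar>Qf a\<bar> + \<bar>b\<bar> * \<bar>Qf a - Qf b\<bar>" by (simp add: abs_mult)
  also have "\<dots> \<le> \<bar>a - b\<bar> * 1 + M * (8 * \<bar>a - b\<bar>)"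
    using Qf_bound[of a] Qf_lip[of a b] assms
    by (intro add_mono mult_mono) auto
  finally show ?thesis by (simp add: algebra_simps)
qed

lemma isCont_Qf: "isCont Qf x"
proof -
  have "1 + sinc (2*x) \<noteq> 0" using one_sinc_pos[of "2*x"] by linarith
  then show ?thesis unfolding Qf_def[abs_def]
    by (intro continuous_intros isCont_o2[OF _ isCont_sinc]) auto
qed

lemma isCont_f: "isCont f_vf x"
  unfolding f_vf_fun by (intro continuous_intros isCont_Qf)

lemma cont_f: "continuous_on S f_vf"
  using isCont_f continuous_at_imp_continuous_on by blast

lemma f_zero: "f_vf 0 = 0" "f_vf (pi/2) = 0" "f_vf pi = 0" "f_vf (3/2*pi) = 0"
proof -
  have c: "cos (3*pi/2) = 0" using cos_3over2_pi by (simp add: mult.commute)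
  show "f_vf 0 = 0" "f_vf (pi/2) = 0" "f_vf pi = 0" by (auto simp: f_vf_def)
  show "f_vf (3/2*pi) = 0" by (simp add: f_vf_def c)
qed

lemma cos_neg_mid: assumes "pi/2 < x" "x < 3/2*pi" shows "cos x < 0"
proof -
  have "cos (x - pi) > 0" using assms by (intro cos_gt_zero_pi) auto
  then show ?thesis by (simp add: cos_diff)
qed

lemma f_neg1: assumes "0 < x" "x < pi/2" shows "f_vf x < 0"
proof -
  have "sin x > 0" "cos x > 0" using assms by (auto intro: sin_gt_zero cos_gt_zero)
  then show ?thesis using D_pos[of x] assms by (simp add: f_vf_def)
qed

lemma f_pos2: assumes "pi/2 < x" "x < pi" shows "f_vf x > 0"
proof -
  have "sin x > 0" "cos x < 0" using assms by (auto intro: sin_gt_zero cos_neg_mid)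
  moreover have "x > 0" using assms pi_gt_zero by linarith
  ultimately have "x * cos x * sin x < 0" by (metis mult_pos_neg mult_neg_pos)
  then show ?thesis using D_pos[of x] \<open>x > 0\<close> by (simp add: f_vf_def divide_neg_pos)
qed

lemma f_neg3: assumes "pi < x" "x < 3/2*pi" shows "f_vf x < 0"
proof -
  have "sin x < 0" "cos x < 0" using assms by (auto intro: sin_lt_zero cos_neg_mid)
  moreover have "x > 0" using assms pi_gt_zero by linarith
  ultimately have "x * cos x * sin x > 0" by (metis mult_pos_neg mult_neg_neg)
  then show ?thesis using D_pos[of x] \<open>x > 0\<close> by (simp add: f_vf_def)
qed


lemma bounded_cont_Icc:
  fixes \<phi> :: "real \<Rightarrow> real"
  assumes "\<And>s. isCont \<phi> s"
  obtains M where "\<And>s. s \<in> {a..b} \<Longrightarrow> \<bar>\<phi> s\<bar> \<le> M"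
proof -
  have "compact (\<phi> ` {a..b})"
    by (intro compact_continuous_image continuous_at_imp_continuous_on) (use assms in auto)
  then obtain M where "\<forall>x\<in>\<phi> ` {a..b}. norm x \<le> M"
    using compact_imp_bounded bounded_iff by metis
  then show ?thesis by (intro that) auto
qed

lemma uniq_fwd:
  fixes F \<phi> \<psi> :: "real \<Rightarrow> real"
  assumes lip: "\<And>M. \<exists>L. \<forall>a b. \<bar>a\<bar> \<le> M \<longrightarrow> \<bar>b\<bar> \<le> M \<longrightarrow> \<bar>F a - F b\<bar> \<le> L * \<bar>a - b\<bar>"
    and d1: "\<And>s. (\<phi> has_real_derivative F (\<phi> s)) (at s)"
    and d2: "\<And>s. (\<psi> has_real_derivative F (\<psi> s)) (at s)"
    and i: "\<phi> 0 = \<psi> 0" and t: "0 \<le> t"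
  shows "\<phi> t = \<psi> t"
proof -
  obtain M1 where M1: "\<And>s. s \<in> {0..t} \<Longrightarrow> \<bar>\<phi> s\<bar> \<le> M1"
    using bounded_cont_Icc[of \<phi>] d1 DERIV_isCont by metis
  obtain M2 where M2: "\<And>s. s \<in> {0..t} \<Longrightarrow> \<bar>\<psi> s\<bar> \<le> M2"
    using bounded_cont_Icc[of \<psi>] d2 DERIV_isCont by metis
  obtain L where L: "\<And>a b. \<bar>a\<bar> \<le> max M1 M2 \<Longrightarrow> \<bar>b\<bar> \<le> max M1 M2 \<Longrightarrow> \<bar>F a - F b\<bar> \<le> L * \<bar>a - b\<bar>"
    using lip by blast
  define v where "v s = (\<phi> s - \<psi> s)\<^sup>2 * exp (- 2 * L * s)" for s
  have dv: "DERIV v s :> (2 * (\<phi> s - \<psi> s) * (F (\<phi> s) - F (\<psi> s)) - 2 * L * (\<phi> s - \<psi> s)\<^sup>2) * exp (- 2 * L * s)" for s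
    unfolding v_def
    by (rule derivative_eq_intros refl d1 d2 | simp)+ (simp add: algebra_simps power2_eq_square)
  have "v t \<le> v 0"
  proof (rule DERIV_nonpos_imp_nonincreasing[OF t])
    fix s assume s: "0 \<le> s" "s \<le> t"
    have b: "\<bar>\<phi> s\<bar> \<le> max M1 M2" "\<bar>\<psi> s\<bar> \<le> max M1 M2" using M1[of s] M2[of s] s by auto
    define X where "X = (\<phi> s - \<psi> s) * (F (\<phi> s) - F (\<psi> s))"
    have e1: "X \<le> \<bar>X\<bar>" by simp
    have "\<bar>X\<bar> = \<bar>\<phi> s - \<psi> s\<bar> * \<bar>F (\<phi> s) - F (\<psi> s)\<bar>" unfolding X_def by (simp add: abs_mult)
    also have "\<dots> \<le> \<bar>\<phi> s - \<psi> s\<bar> * (L * \<bar>\<phi> s - \<psi> s\<bar>)"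
      using L[OF b] by (intro mult_left_mono) auto
    also have "\<dots> = L * (\<phi> s - \<psi> s)\<^sup>2"
      by (metis abs_mult_self_eq mult.left_commute power2_eq_square)
    finally have e2: "\<bar>X\<bar> \<le> L * (\<phi> s - \<psi> s)\<^sup>2" .
    have "2 * (\<phi> s - \<psi> s) * (F (\<phi> s) - F (\<psi> s)) - 2 * L * (\<phi> s - \<psi> s)\<^sup>2 \<le> 0"
    proof -
      have "2 * (\<phi> s - \<psi> s) * (F (\<phi> s) - F (\<psi> s)) = 2 * X" by (simp only: X_def mult.assoc)
      moreover have "2 * L * (\<phi> s - \<psi> s)\<^sup>2 = 2 * (L * (\<phi> s - \<psi> s)\<^sup>2)" by (simp only: mult.assoc)
      ultimately show ?thesis using e1 e2 by linarith
    qed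
    hence "(2 * (\<phi> s - \<psi> s) * (F (\<phi> s) - F (\<psi> s)) - 2 * L * (\<phi> s - \<psi> s)\<^sup>2) * exp (- 2 * L * s) \<le> 0"
      by (intro mult_nonpos_nonneg) auto
    then show "\<exists>y. DERIV v s :> y \<and> y \<le> 0" using dv by blast
  qed
  moreover have "v 0 = 0" using i by (simp add: v_def)
  moreover have "v t \<ge> 0" by (simp add: v_def)
  ultimately have "v t = 0" by linarith
  then show ?thesis by (simp add: v_def)
qed

lemma uniq:
  fixes F \<phi> \<psi> :: "real \<Rightarrow> real"
  assumes lip: "\<And>M. \<exists>L. \<forall>a b. \<bar>a\<bar> \<le> M \<longrightarrow> \<bar>b\<bar> \<le> M \<longrightarrow> \<bar>F a - F b\<bar> \<le> L * \<bar>a - b\<bar>"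
    and d1: "\<And>s. (\<phi> has_real_derivative F (\<phi> s)) (at s)"
    and d2: "\<And>s. (\<psi> has_real_derivative F (\<psi> s)) (at s)"
    and i: "\<phi> 0 = \<psi> 0"
  shows "\<phi> = \<psi>"
proof
  fix t :: real
  show "\<phi> t = \<psi> t"
  proof (cases "0 \<le> t")
    case True then show ?thesis using uniq_fwd[OF lip d1 d2 i] by blast
  next
    case False
    have lip': "\<exists>L. \<forall>a b. \<bar>a\<bar> \<le> M \<longrightarrow> \<bar>b\<bar> \<le> M \<longrightarrow> \<bar>(- F a) - (- F b)\<bar> \<le> L * \<bar>a - b\<bar>" for M
      using lip[of M] by (metis abs_minus_commute minus_diff_eq minus_diff_minus)
    have r: "((\<lambda>s. g (- s)) has_real_derivative - F (g (- s))) (at s)"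
      if "\<And>s. (g has_real_derivative F (g s)) (at s)" for g s
      using that[of "-s"] DERIV_mirror[of g "F (g (- s))" s] by simp
    have "(\<lambda>s. \<phi> (- s)) (- t) = (\<lambda>s. \<psi> (- s)) (- t)"
      by (rule uniq_fwd[OF lip' r[OF d1] r[OF d2]]) (use i False in auto)
    then show ?thesis by simp
  qed
qed


lemma exist_pos:
  fixes F :: "real \<Rightarrow> real" and a b C r :: real
  assumes ab: "a < b" and cont: "continuous_on {a<..<b} F"
    and pos: "\<And>y. a < y \<Longrightarrow> y < b \<Longrightarrow> F y > 0"
    and la: "\<And>y. a < y \<Longrightarrow> y < b \<Longrightarrow> F y \<le> C * (y - a)"
    and lb: "\<And>y. a < y \<Longrightarrow> y < b \<Longrightarrow> F y \<le> C * (b - y)"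
    and C: "C > 0" and r: "a < r" "r < b"
  shows "\<exists>\<phi>. \<phi> 0 = r \<and> (\<forall>s. a < \<phi> s \<and> \<phi> s < b) \<and> (\<forall>s. (\<phi> has_real_derivative F (\<phi> s)) (at s))"
proof -
  define h where "h y = 1 / F y" for y
  define T where "T x = (if r \<le> x then integral {r..x} h else - integral {x..r} h)" for x
  have hcont: "continuous_on {c..d} h" if "a < c" "d < b" for c d
  proof -
    have "continuous_on {c..d} F" by (rule continuous_on_subset[OF cont]) (use that in auto)
    moreover have "\<forall>y\<in>{c..d}. F y \<noteq> 0"
    proof
      fix y assume "y \<in> {c..d}"
      then have "a < y" "y < b" using that by auto
      then show "F y \<noteq> 0" using pos[of y] by auto
    qed
    ultimately show ?thesis unfolding h_def by (intro continuous_intros) auto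
  qed
  have dT: "DERIV T x :> h x" if x: "a < x" "x < b" for x
  proof -
    define c where "c = (a + min x r) / 2"
    define d where "d = (b + max x r) / 2"
    have cd: "a < c" "c < x" "c < r" "d < b" "x < d" "r < d"
      using x r unfolding c_def d_def by auto
    have hc: "continuous_on {c..d} h" using hcont cd by auto
    define U where "U u = integral {c..u} h" for u
    have "(U has_real_derivative h x) (at x within {c..d})"
      unfolding U_def by (rule integral_has_real_derivative[OF hc]) (use cd in auto)
    hence dU: "(U has_real_derivative h x) (at x)" using at_within_Icc_at[of c x d] cd by simp
    have int: "h integrable_on {c..u}" if "u \<le> d" for u
      by (rule integrable_continuous_real, rule continuous_on_subset[OF hc]) (use that in auto)
    have eq: "U u - U r = T u" if "u \<in> {c<..<d}" for u
    proof (cases "r \<le> u")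
      case True
      have "integral {c..r} h + integral {r..u} h = integral {c..u} h"
        by (rule Henstock_Kurzweil_Integration.integral_combine) (use True cd that int in auto)
      then show ?thesis using True unfolding U_def T_def by simp
    next
      case False
      have "integral {c..u} h + integral {u..r} h = integral {c..r} h"
        by (rule Henstock_Kurzweil_Integration.integral_combine) (use False cd that int in auto)
      then show ?thesis using False unfolding U_def T_def by simp
    qed
    have "((\<lambda>u. U u - U r) has_real_derivative h x) (at x)"
      using dU by (auto intro!: derivative_eq_intros)
    then show ?thesis
      by (rule has_field_derivative_transform_within_open[where S="{c<..<d}"]) (use cd eq in auto)
  qed
  have hpos: "h y > 0" if "a < y" "y < b" for y using pos[OF that] unfolding h_def by simp
  have Tcont: "isCont T x" if "a < x" "x < b" for x using dT[OF that] DERIV_isCont by blast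
  have Tmono: "T x < T y" if "a < x" "x < y" "y < b" for x y
  proof (rule DERIV_pos_imp_increasing[OF that(2)])
    fix u assume "x \<le> u" "u \<le> y"
    hence "a < u" "u < b" using that by auto
    thus "\<exists>z. DERIV T u :> z \<and> z > 0" using dT hpos by blast
  qed
  have T0: "T r = 0" unfolding T_def by simp
  have low: "T x \<le> (ln (x - a) - ln (r - a)) / C" if "a < x" "x \<le> r" for x
  proof -
    define D where "D u = T u - ln (u - a) / C" for u
    have "D x \<le> D r"
    proof (rule DERIV_nonneg_imp_nondecreasing[OF that(2)])
      fix u assume u: "x \<le> u" "u \<le> r"
      hence u': "a < u" "u < b" using that r by auto
      have "DERIV D u :> h u - 1 / (u - a) / C"
        unfolding D_def using u' C by (auto intro!: derivative_eq_intros dT simp: field_simps)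
      moreover have "1 / (u - a) / C \<le> h u"
      proof -
        have "F u \<le> C * (u - a)" "F u > 0" using la[OF u'] pos[OF u'] by auto
        then show ?thesis unfolding h_def using u' C by (simp add: field_simps)
      qed
      ultimately show "\<exists>y. DERIV D u :> y \<and> 0 \<le> y" by force
    qed
    then show ?thesis using T0 unfolding D_def diff_divide_distrib by linarith
  qed
  have up: "T x \<ge> (ln (b - r) - ln (b - x)) / C" if "r \<le> x" "x < b" for x
  proof -
    define E where "E u = T u + ln (b - u) / C" for u
    have "E r \<le> E x"
    proof (rule DERIV_nonneg_imp_nondecreasing[OF that(1)])
      fix u assume u: "r \<le> u" "u \<le> x"
      hence u': "a < u" "u < b" using that r by auto
      have "DERIV E u :> h u - 1 / (b - u) / C"
        unfolding E_def using u' C by (auto intro!: derivative_eq_intros dT simp: field_simps)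
      moreover have "1 / (b - u) / C \<le> h u"
      proof -
        have "F u \<le> C * (b - u)" "F u > 0" using lb[OF u'] pos[OF u'] by auto
        then show ?thesis unfolding h_def using u' C by (simp add: field_simps)
      qed
      ultimately show "\<exists>y. DERIV E u :> y \<and> 0 \<le> y" by force
    qed
    then show ?thesis using T0 unfolding E_def diff_divide_distrib by linarith
  qed
  have surj: "\<exists>x. a < x \<and> x < b \<and> T x = t" for t
  proof (cases "t \<le> 0")
    case True
    define x0 where "x0 = a + (r - a) * exp (C * t)"
    have e: "exp (C * t) \<le> 1" using True C by (simp add: mult_nonneg_nonpos)
    have "(r - a) * exp (C * t) \<le> (r - a) * 1" using e r by (intro mult_left_mono) auto
    moreover have "(r - a) * exp (C * t) > 0" using r by simp
    ultimately have x0: "a < x0" "x0 \<le> r" unfolding x0_def by auto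
    have "ln (x0 - a) = ln (r - a) + C * t" unfolding x0_def using r by (simp add: ln_mult)
    hence "T x0 \<le> t" using low[OF x0] C by simp
    then obtain x where "x0 \<le> x" "x \<le> r" "T x = t"
      using IVT[of T x0 t r] x0 T0 True Tcont r by force
    then show ?thesis using x0 r by (intro exI[of _ x]) auto
  next
    case False
    define x1 where "x1 = b - (b - r) * exp (- (C * t))"
    have e: "exp (- (C * t)) \<le> 1" using False C by simp
    have "(b - r) * exp (- (C * t)) \<le> (b - r) * 1" using e r by (intro mult_left_mono) auto
    moreover have "(b - r) * exp (- (C * t)) > 0" using r by simp
    ultimately have x1: "r \<le> x1" "x1 < b" unfolding x1_def by auto
    have "ln (b - x1) = ln (b - r) - C * t" unfolding x1_def using r by (simp add: ln_mult)
    hence "T x1 \<ge> t" using up[OF x1] C by simp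
    then obtain x where "r \<le> x" "x \<le> x1" "T x = t"
      using IVT[of T r t x1] x1 T0 False Tcont r by force
    then show ?thesis using x1 r by (intro exI[of _ x]) auto
  qed
  have uniqT: "x = y" if "a < x" "x < b" "a < y" "y < b" "T x = T y" for x y
    using Tmono[of x y] Tmono[of y x] that by (cases x y rule: linorder_cases) auto
  define \<phi> where "\<phi> t = (THE x. a < x \<and> x < b \<and> T x = t)" for t
  have phi: "a < \<phi> t \<and> \<phi> t < b \<and> T (\<phi> t) = t" for t
  proof -
    obtain x where x: "a < x \<and> x < b \<and> T x = t" using surj by blast
    show ?thesis unfolding \<phi>_def
      by (rule theI[of _ x]) (use x uniqT in blast)+
  qed
  have phiT: "\<phi> (T z) = z" if "a < z" "z < b" for z
    using phi[of "T z"] uniqT that by blast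
  have "\<phi> 0 = r" using phiT[OF r] T0 by simp
  moreover have "(\<phi> has_real_derivative F (\<phi> t)) (at t)" for t
  proof -
    define x where "x = \<phi> t"
    have x: "a < x" "x < b" "T x = t" using phi[of t] unfolding x_def by auto
    define d where "d = min (x - a) (b - x) / 2"
    have d: "d > 0" using x unfolding d_def by auto
    have zin: "a < z \<and> z < b" if "\<bar>z - x\<bar> \<le> d" for z
    proof -
      have "d \<le> (x - a) / 2" "d \<le> (b - x) / 2" unfolding d_def by auto
      then show ?thesis using that x by (auto simp: abs_le_iff)
    qed
    have "isCont \<phi> (T x)"
      by (rule isCont_inverse_function[OF d]) (use zin phiT Tcont in auto)
    hence ic: "isCont \<phi> t" using x by simp
    have "DERIV \<phi> t :> inverse (h (\<phi> t))"
      by (rule DERIV_inverse_function[where a="t - 1" and b="t + 1"])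
         (use dT phi hpos ic in \<open>auto simp: less_le\<close>)
    then show ?thesis using pos[of "\<phi> t"] phi[of t] unfolding h_def by simp
  qed
  ultimately show ?thesis using phi by blast
qed

lemma exist_neg:
  fixes F :: "real \<Rightarrow> real" and a b C r :: real
  assumes ab: "a < b" and cont: "continuous_on {a<..<b} F"
    and neg: "\<And>y. a < y \<Longrightarrow> y < b \<Longrightarrow> F y < 0"
    and la: "\<And>y. a < y \<Longrightarrow> y < b \<Longrightarrow> - F y \<le> C * (y - a)"
    and lb: "\<And>y. a < y \<Longrightarrow> y < b \<Longrightarrow> - F y \<le> C * (b - y)"
    and C: "C > 0" and r: "a < r" "r < b"
  shows "\<exists>\<phi>. \<phi> 0 = r \<and> (\<forall>s. a < \<phi> s \<and> \<phi> s < b) \<and> (\<forall>s. (\<phi> has_real_derivative F (\<phi> s)) (at s))"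
proof -
  have "continuous_on {a<..<b} (\<lambda>y. - F y)" using cont by (intro continuous_intros)
  then obtain \<phi> where p: "\<phi> 0 = r" "\<forall>s. a < \<phi> s \<and> \<phi> s < b"
      "\<forall>s. (\<phi> has_real_derivative - F (\<phi> s)) (at s)"
    using exist_pos[of a b "\<lambda>y. - F y" C r] assms by force
  have "((\<lambda>s. \<phi> (- s)) has_real_derivative F (\<phi> (- s))) (at s)" for s
    using p(3)[rule_format, of "-s"] DERIV_mirror[of \<phi> "- F (\<phi> (- s))" s] by simp
  then show ?thesis using p by (intro exI[of _ "\<lambda>s. \<phi> (- s)"]) auto
qed


lemma f_lip_ex: "\<exists>L. \<forall>a b. \<bar>a\<bar> \<le> M \<longrightarrow> \<bar>b\<bar> \<le> M \<longrightarrow> \<bar>f_vf a - f_vf b\<bar> \<le> L * \<bar>a - b\<bar>"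
  using f_lip by blast

lemma flow_eq:
  assumes "\<phi> 0 = r" "\<And>s. (\<phi> has_real_derivative f_vf (\<phi> s)) (at s)"
  shows "flow_F r t = \<phi> t"
proof -
  have "(THE phi. phi 0 = r \<and> (\<forall>s. (phi has_real_derivative f_vf (phi s)) (at s))) = \<phi>"
  proof (rule the_equality)
    show "\<phi> 0 = r \<and> (\<forall>s. (\<phi> has_real_derivative f_vf (\<phi> s)) (at s))" using assms by auto
    fix phi assume p: "phi 0 = r \<and> (\<forall>s. (phi has_real_derivative f_vf (phi s)) (at s))"
    show "phi = \<phi>" by (rule uniq[OF f_lip_ex]) (use p assms in auto)
  qed
  then show ?thesis unfolding flow_F_def by simp
qed

lemma fg: assumes "x \<noteq> 0" "sin x \<noteq> 0"
  shows "f_vf x * (sin x + x * cos x) / (x * sin x) = g_fn x"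
proof -
  have d: "x + cos x * sin x \<noteq> 0" using D_nz[OF assms(1)] .
  define D where "D = x + cos x * sin x"
  have xs: "x * sin x \<noteq> 0" using assms by simp
  have "f_vf x = (x * sin x) * (- cos x / D)" using assms(1) unfolding f_vf_def D_def by simp
  hence "f_vf x * (sin x + x * cos x) / (x * sin x) = (- cos x / D) * (sin x + x * cos x)"
    using xs by simp
  also have "\<dots> = g_fn x" using assms(1) d unfolding g_fn_def D_def by (simp add: field_simps)
  finally show ?thesis .
qed

lemma G_formula:
  assumes p0: "\<phi> 0 = r" and dphi: "\<And>s. (\<phi> has_real_derivative f_vf (\<phi> s)) (at s)"
    and sg: "\<And>s. \<sigma> * (\<phi> s * sin (\<phi> s)) > 0" and t: "0 \<le> t"
  shows "G_fn r t = ln (\<sigma> * (\<phi> t * sin (\<phi> t))) - ln (\<sigma> * (r * sin r))"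
proof -
  define H where "H s = ln (\<sigma> * (\<phi> s * sin (\<phi> s)))" for s
  have nz: "\<phi> s \<noteq> 0" "sin (\<phi> s) \<noteq> 0" "\<sigma> \<noteq> 0" for s using sg[of s] by auto
  have dH: "(H has_real_derivative g_fn (\<phi> s)) (at s)" for s
  proof -
    have "(H has_real_derivative (\<sigma> * (f_vf (\<phi> s) * sin (\<phi> s) + \<phi> s * (cos (\<phi> s) * f_vf (\<phi> s)))) / (\<sigma> * (\<phi> s * sin (\<phi> s)))) (at s)"
      unfolding H_def using sg[of s] by (auto intro!: derivative_eq_intros dphi)
    moreover have "(\<sigma> * (f_vf (\<phi> s) * sin (\<phi> s) + \<phi> s * (cos (\<phi> s) * f_vf (\<phi> s)))) / (\<sigma> * (\<phi> s * sin (\<phi> s)))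
       = f_vf (\<phi> s) * (sin (\<phi> s) + \<phi> s * cos (\<phi> s)) / (\<phi> s * sin (\<phi> s))"
      using nz(1,2)[of s] nz(3) by (simp add: field_simps)
    ultimately show ?thesis using fg[OF nz(1,2)[of s]] by simp
  qed
  have "((\<lambda>s. g_fn (\<phi> s)) has_integral (H t - H 0)) {0..t}"
    by (rule fundamental_theorem_of_calculus[OF t])
       (use dH in \<open>auto simp: has_real_derivative_iff_has_vector_derivative[symmetric] intro: has_field_derivative_at_within\<close>)
  hence "integral {0..t} (\<lambda>s. g_fn (\<phi> s)) = H t - H 0" by (rule integral_unique)
  moreover have "flow_F r = \<phi>" using flow_eq[OF p0 dphi] by auto
  ultimately show ?thesis unfolding G_fn_def H_def using p0 by simp
qed

lemma G_const:
  assumes "f_vf r = 0" "0 \<le> t"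
  shows "G_fn r t = t * g_fn r"
proof -
  have "flow_F r s = r" for s by (rule flow_eq[of "\<lambda>_. r"]) (use assms in auto)
  then show ?thesis using assms unfolding G_fn_def by simp
qed


definition dd :: "real \<Rightarrow> real" where "dd x = sin x + x * cos x"

lemma dd_deriv: "DERIV dd x :> 2 * cos x - x * sin x"
  unfolding dd_def by (auto intro!: derivative_eq_intros simp: algebra_simps)

lemma p_deriv: "DERIV (\<lambda>x. x * sin x) x :> dd x"
  unfolding dd_def by (auto intro!: derivative_eq_intros simp: algebra_simps)

lemma isCont_dd: "isCont dd x" using dd_deriv DERIV_isCont by blast

lemma dd_strict_dec: assumes "pi/2 \<le> x" "x < y" "y \<le> pi" shows "dd y < dd x"
proof (rule DERIV_neg_imp_decreasing_open[OF assms(2)])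
  fix u assume u: "x < u" "u < y"
  hence "cos u < 0" "sin u > 0" "u > 0" using assms pi_gt_zero
    by (auto intro!: cos_neg_mid sin_gt_zero)
  hence "2 * cos u - u * sin u < 0" by (smt (verit) mult_pos_pos)
  then show "\<exists>z. DERIV dd u :> z \<and> z < 0" using dd_deriv by blast
next
  show "continuous_on {x..y} dd" using isCont_dd continuous_at_imp_continuous_on by blast
qed

lemma dd_pi2: "dd (pi/2) = 1" by (simp add: dd_def)
lemma dd_pi: "dd pi = - pi" by (simp add: dd_def)

lemma rM_char: assumes "pi/2 < x" "x < pi" shows "x = - tan x \<longleftrightarrow> dd x = 0"
proof -
  have c: "cos x < 0" using assms by (intro cos_neg_mid) auto
  show ?thesis unfolding dd_def tan_def using c by (auto simp: field_simps)
qed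

lemma rM_ex: "\<exists>x. pi/2 < x \<and> x < pi \<and> dd x = 0"
proof -
  obtain x where x: "pi/2 \<le> x" "x \<le> pi" "dd x = 0"
    using IVT2[of dd pi 0 "pi/2"] isCont_dd dd_pi2 dd_pi pi_gt_zero by force
  moreover have "x \<noteq> pi/2" using x(3) dd_pi2 by (metis zero_neq_one)
  moreover have "x \<noteq> pi" using x(3) dd_pi pi_gt_zero by force
  ultimately show ?thesis by (intro exI[of _ x]) auto
qed

lemma rM_props: "pi/2 < r_M" "r_M < pi" "dd r_M = 0"
proof -
  obtain x where x: "pi/2 < x" "x < pi" "dd x = 0" using rM_ex by blast
  have "r_M = x" unfolding r_M_def
  proof (rule the_equality)
    show "x \<in> {pi/2<..<pi} \<and> x = - tan x" using x rM_char by auto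
    fix y assume y: "y \<in> {pi/2<..<pi} \<and> y = - tan y"
    hence "dd y = 0" using rM_char by auto
    then show "y = x" using dd_strict_dec[of x y] dd_strict_dec[of y x] x y
      by (cases x y rule: linorder_cases) auto
  qed
  then show "pi/2 < r_M" "r_M < pi" "dd r_M = 0" using x by auto
qed

lemma dd_pos: assumes "pi/2 \<le> x" "x < r_M" shows "dd x > 0"
  using dd_strict_dec[of x r_M] assms rM_props by auto

lemma dd_neg: assumes "r_M < x" "x \<le> pi" shows "dd x < 0"
  using dd_strict_dec[of r_M x] assms rM_props by auto

lemma p_le_max: assumes "pi/2 < x" "x < pi" shows "x * sin x \<le> r_M * sin r_M"
proof (cases "x \<le> r_M")
  case True
  show ?thesis
  proof (rule DERIV_nonneg_imp_nondecreasing[OF True, of "\<lambda>x. x * sin x"])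
    fix u assume "x \<le> u" "u \<le> r_M"
    hence "dd u \<ge> 0" using dd_pos[of u] rM_props assms by (cases "u = r_M") auto
    then show "\<exists>y. DERIV (\<lambda>x. x * sin x) u :> y \<and> 0 \<le> y" using p_deriv by blast
  qed
next
  case False
  show ?thesis
  proof (rule DERIV_nonpos_imp_nonincreasing[of r_M x "\<lambda>x. x * sin x"])
    show "r_M \<le> x" using False by simp
    fix u assume "r_M \<le> u" "u \<le> x"
    hence "dd u \<le> 0" using dd_neg[of u] rM_props assms by (cases "u = r_M") auto
    then show "\<exists>y. DERIV (\<lambda>x. x * sin x) u :> y \<and> y \<le> 0" using p_deriv by blast
  qed
qed

lemma p_dec_after: assumes "r_M \<le> x" "x \<le> y" "y < pi" shows "y * sin y \<le> x * sin x"
proof (rule DERIV_nonpos_imp_nonincreasing[OF assms(2), of "\<lambda>x. x * sin x"])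
  fix u assume "x \<le> u" "u \<le> y"
  hence "dd u \<le> 0" using dd_neg[of u] rM_props assms by (cases "u = r_M") auto
  then show "\<exists>z. DERIV (\<lambda>x. x * sin x) u :> z \<and> z \<le> 0" using p_deriv by blast
qed

lemma p_gt_half: assumes "pi/2 < x" "x \<le> r_M" shows "x * sin x > pi/2"
proof -
  have "(\<lambda>x. x * sin x) (pi/2) < (\<lambda>x. x * sin x) x"
  proof (rule DERIV_pos_imp_increasing_open[OF assms(1)])
    fix u assume "pi/2 < u" "u < x"
    hence "dd u > 0" using dd_pos[of u] assms by auto
    then show "\<exists>y. DERIV (\<lambda>x. x * sin x) u :> y \<and> y > 0" using p_deriv by blast
  next
    show "continuous_on {pi/2..x} (\<lambda>x. x * sin x)" by (intro continuous_intros)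
  qed
  then show ?thesis by simp
qed

lemma num_d: "dd (407/200) < 0"
proof -
  define x :: real where "x = 407/200"
  define E :: real where "E = inverse (fact 14) * \<bar>x\<bar> ^ 14"
  define Ps where "Ps = x - x^3/6 + x^5/120 - x^7/5040 + x^9/362880 - x^11/39916800 + x^13/6227020800"
  define Pc where "Pc = 1 - x^2/2 + x^4/24 - x^6/720 + x^8/40320 - x^10/3628800 + x^12/479001600"
  have xp: "x > 0" by (simp add: x_def)
  have e1: "(\<Sum>m<14. sin_coeff m * x ^ m) = Ps"
    unfolding Ps_def by (simp add: lessThan_nat_numeral sin_coeff_def fact_numeral)
  have e2: "(\<Sum>m<14. cos_coeff m * x ^ m) = Pc"
    unfolding Pc_def by (simp add: lessThan_nat_numeral cos_coeff_def fact_numeral)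
  have s: "\<bar>sin x - Ps\<bar> \<le> E"
    using Maclaurin_sin_bound[of x 14] unfolding e1 E_def .
  obtain t where t: "cos x = (\<Sum>m<14. cos_coeff m * x ^ m) + (cos(t + 1/2 * real 14 * pi) / fact 14) * x ^ 14"
    using Maclaurin_cos_expansion by blast
  then obtain C where t: "cos x = Pc + C / fact 14 * x ^ 14" and C: "\<bar>C\<bar> \<le> 1"
    unfolding e2 using abs_cos_le_one by blast
  have "\<bar>cos x - Pc\<bar> = \<bar>C\<bar> * (inverse (fact 14) * \<bar>x\<bar> ^ 14)"
    unfolding t by (simp add: abs_mult divide_inverse power_abs)
  also have "\<dots> \<le> E" unfolding E_def
    by (rule mult_left_le_one_le) (use C in auto)
  finally have c: "\<bar>cos x - Pc\<bar> \<le> E" .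
  have "sin x + x * cos x \<le> (Ps + E) + x * (Pc + E)"
    using s c xp by (intro add_mono mult_left_mono) auto
  also have "\<dots> < 0" unfolding Ps_def Pc_def E_def x_def by (simp add: power_divide fact_numeral)
  finally show ?thesis unfolding x_def dd_def .
qed

lemma rM_upper: "r_M < 407/200"
proof (rule ccontr)
  assume "\<not> r_M < 407/200"
  hence h: "407/200 \<le> r_M" by simp
  have "pi/2 \<le> 407/200" using pi_approx by simp
  moreover have "407/200 \<noteq> r_M"
  proof
    assume "407/200 = r_M" then have "dd (407/200) = 0" using rM_props(3) by metis
    then show False using num_d by simp
  qed
  ultimately have "dd (407/200) > 0" using dd_pos[of "407/200"] h by auto
  then show False using num_d by simp
qed

lemma pM_sq: "(r_M * sin r_M)\<^sup>2 = r_M ^ 4 / (1 + r_M\<^sup>2)"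
proof -
  have s: "sin r_M = - r_M * cos r_M" using rM_props(3) unfolding dd_def by linarith
  have "(cos r_M)\<^sup>2 * (1 + r_M\<^sup>2) = 1"
    using sin_cos_squared_add[of r_M] unfolding s by (simp add: algebra_simps power2_eq_square)
  moreover have pos: "1 + r_M\<^sup>2 \<noteq> 0" by (smt (verit) zero_le_power2)
  ultimately have c: "(cos r_M)\<^sup>2 = 1 / (1 + r_M\<^sup>2)" by (simp add: eq_divide_eq)
  show ?thesis unfolding s by (simp add: power2_eq_square c[unfolded power2_eq_square] field_simps power4_eq_xxxx)
qed

lemma pM_bounds: "pi/2 < r_M * sin r_M" "r_M * sin r_M < 7 * pi / 12"
proof -
  show "pi/2 < r_M * sin r_M" using p_gt_half[of r_M] rM_props by auto
  define x where "x = r_M"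
  define b :: real where "b = 407/200"
  have x: "0 < x" "x < b" using rM_props rM_upper pi_gt_zero unfolding x_def b_def by auto
  have "x ^ 4 * (1 + b\<^sup>2) < b ^ 4 * (1 + x\<^sup>2)"
  proof -
    have "x\<^sup>2 < b\<^sup>2" using x by (simp add: power_strict_mono)
    have "x ^ 4 = x\<^sup>2 * x\<^sup>2" "b ^ 4 = b\<^sup>2 * b\<^sup>2" by (simp_all add: power4_eq_xxxx power2_eq_square)
    moreover have "x\<^sup>2 * x\<^sup>2 < b\<^sup>2 * b\<^sup>2" using \<open>x\<^sup>2 < b\<^sup>2\<close> x by (intro mult_strict_mono) auto
    moreover have "x\<^sup>2 * x\<^sup>2 * b\<^sup>2 \<le> b\<^sup>2 * b\<^sup>2 * x\<^sup>2"
    proof -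
      have "x\<^sup>2 * (x\<^sup>2 * b\<^sup>2) \<le> x\<^sup>2 * (b\<^sup>2 * b\<^sup>2)" using \<open>x\<^sup>2 < b\<^sup>2\<close> by (intro mult_left_mono mult_right_mono) auto
      then show ?thesis by (simp add: algebra_simps)
    qed
    ultimately show ?thesis by (simp add: algebra_simps)
  qed
  hence "x ^ 4 / (1 + x\<^sup>2) < b ^ 4 / (1 + b\<^sup>2)"
    by (simp add: field_simps add_pos_nonneg)
  also have "\<dots> < (7 * 3.141592653588 / 12)\<^sup>2" unfolding b_def by (simp add: power_divide)
  also have "\<dots> \<le> (7 * pi / 12)\<^sup>2" using pi_approx by (intro power_mono) auto
  finally have "(r_M * sin r_M)\<^sup>2 < (7 * pi / 12)\<^sup>2" unfolding pM_sq x_def .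
  then show "r_M * sin r_M < 7 * pi / 12"
    by (rule power_less_imp_less_base) (use pi_gt_zero in simp)
qed


lemma fbound: assumes "\<bar>e\<bar> \<le> 5" "f_vf e = 0" shows "\<bar>f_vf y\<bar> \<le> 41 * \<bar>y - e\<bar>"
  using f_lip[of e 5 y] assms by simp

lemma pi_lt: "pi < 3.2" using pi_approx by simp

lemma case1: assumes r: "0 < r" "r < pi/2" and t: "0 \<le> t" shows "G_fn r t \<le> 0"
proof -
  have fb0: "\<bar>f_vf y\<bar> \<le> 41 * \<bar>y - 0\<bar>" for y by (rule fbound) (auto simp: f_zero)
  have fb1: "\<bar>f_vf y\<bar> \<le> 41 * \<bar>y - pi/2\<bar>" for y by (rule fbound) (use pi_lt in \<open>auto simp: f_zero\<close>)
  obtain \<phi> where p: "\<phi> 0 = r" "\<And>s. 0 < \<phi> s \<and> \<phi> s < pi/2"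
    "\<And>s. (\<phi> has_real_derivative f_vf (\<phi> s)) (at s)"
  proof -
    have "\<exists>\<phi>. \<phi> 0 = r \<and> (\<forall>s. 0 < \<phi> s \<and> \<phi> s < pi/2) \<and> (\<forall>s. (\<phi> has_real_derivative f_vf (\<phi> s)) (at s))"
    proof (rule exist_neg[where C=41])
      fix y assume y: "0 < y" "y < pi/2"
      show "f_vf y < 0" using f_neg1 y by auto
      show "- f_vf y \<le> 41 * (y - 0)" using fb0[of y] y by auto
      show "- f_vf y \<le> 41 * (pi/2 - y)" using fb1[of y] y by auto
    qed (use r cont_f in auto)
    then show ?thesis using that by blast
  qed
  have sg: "1 * (\<phi> s * sin (\<phi> s)) > 0" for s
    using p(2)[of s] sin_gt_zero[of "\<phi> s"] pi_gt_zero by simp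
  have G: "G_fn r t = ln (1 * (\<phi> t * sin (\<phi> t))) - ln (1 * (r * sin r))"
    by (rule G_formula[OF p(1) p(3) sg t])
  have "\<phi> t \<le> \<phi> 0"
  proof (rule DERIV_nonpos_imp_nonincreasing[OF t])
    fix u show "\<exists>y. DERIV \<phi> u :> y \<and> y \<le> 0" using p(3)[of u] f_neg1[of "\<phi> u"] p(2)[of u]
      by (intro exI[of _ "f_vf (\<phi> u)"]) auto
  qed
  hence le: "\<phi> t \<le> r" using p(1) by simp
  have "\<phi> t * sin (\<phi> t) \<le> r * sin r"
  proof (rule DERIV_nonneg_imp_nondecreasing[OF le, of "\<lambda>x. x * sin x"])
    fix u assume u: "\<phi> t \<le> u" "u \<le> r"
    hence u': "0 < u" "u < pi/2" using p(2)[of t] r by auto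
    hence "sin u > 0" "cos u > 0" by (auto intro: sin_gt_zero cos_gt_zero)
    hence "dd u \<ge> 0" unfolding dd_def using u' by simp
    then show "\<exists>y. DERIV (\<lambda>x. x * sin x) u :> y \<and> 0 \<le> y" using p_deriv by blast
  qed
  then show ?thesis unfolding G using sg[of t] sg[of 0] p(1) by simp
qed

lemma case3: assumes r: "pi < r" "r < 3/2*pi" and t: "0 \<le> t" shows "G_fn r t \<le> 0"
proof -
  have fb0: "\<bar>f_vf y\<bar> \<le> 41 * \<bar>y - pi\<bar>" for y by (rule fbound) (use pi_lt in \<open>auto simp: f_zero\<close>)
  have fb1: "\<bar>f_vf y\<bar> \<le> 41 * \<bar>y - 3/2*pi\<bar>" for y by (rule fbound[OF _ f_zero(4)]) (use pi_lt pi_gt_zero in auto)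
  obtain \<phi> where p: "\<phi> 0 = r" "\<And>s. pi < \<phi> s \<and> \<phi> s < 3/2*pi"
    "\<And>s. (\<phi> has_real_derivative f_vf (\<phi> s)) (at s)"
  proof -
    have "\<exists>\<phi>. \<phi> 0 = r \<and> (\<forall>s. pi < \<phi> s \<and> \<phi> s < 3/2*pi) \<and> (\<forall>s. (\<phi> has_real_derivative f_vf (\<phi> s)) (at s))"
    proof (rule exist_neg[where C=41])
      fix y assume y: "pi < y" "y < 3/2*pi"
      show "f_vf y < 0" using f_neg3 y by auto
      show "- f_vf y \<le> 41 * (y - pi)" using fb0[of y] y by auto
      show "- f_vf y \<le> 41 * (3/2*pi - y)" using fb1[of y] y by auto
    qed (use r cont_f in auto)
    then show ?thesis using that by blast
  qed
  have sg: "(-1) * (\<phi> s * sin (\<phi> s)) > 0" for s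
  proof -
    have "sin (\<phi> s) < 0" using p(2)[of s] by (intro sin_lt_zero) auto
    moreover have "\<phi> s > 0" using p(2)[of s] pi_gt_zero by linarith
    ultimately show ?thesis by (simp add: mult_pos_neg)
  qed
  have G: "G_fn r t = ln ((-1) * (\<phi> t * sin (\<phi> t))) - ln ((-1) * (r * sin r))"
    by (rule G_formula[OF p(1) p(3) sg t])
  have "\<phi> t \<le> \<phi> 0"
  proof (rule DERIV_nonpos_imp_nonincreasing[OF t])
    fix u show "\<exists>y. DERIV \<phi> u :> y \<and> y \<le> 0" using p(3)[of u] f_neg3[of "\<phi> u"] p(2)[of u]
      by (intro exI[of _ "f_vf (\<phi> u)"]) auto
  qed
  hence le: "\<phi> t \<le> r" using p(1) by simp
  have "- (\<phi> t * sin (\<phi> t)) \<le> - (r * sin r)"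
  proof (rule DERIV_nonneg_imp_nondecreasing[OF le, of "\<lambda>x. - (x * sin x)"])
    fix u assume u: "\<phi> t \<le> u" "u \<le> r"
    hence u': "pi < u" "u < 3/2*pi" using p(2)[of t] r by auto
    hence "sin u < 0" "cos u < 0" by (auto intro: sin_lt_zero cos_neg_mid)
    moreover have "u > 0" using u' pi_gt_zero by linarith
    ultimately have "u * cos u < 0" by (simp add: mult_pos_neg)
    hence "- dd u \<ge> 0" unfolding dd_def using \<open>sin u < 0\<close> by simp
    moreover have "DERIV (\<lambda>x. - (x * sin x)) u :> - dd u" using p_deriv[of u] by (intro derivative_intros)
    ultimately show "\<exists>y. DERIV (\<lambda>x. - (x * sin x)) u :> y \<and> 0 \<le> y" by blast
  qed
  then show ?thesis unfolding G using sg[of t] sg[of 0] p(1) by simp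
qed

lemma case2: assumes r: "pi/2 < r" "r < pi" and t: "0 \<le> t"
  shows "G_fn r t < ln (2 * r_M * sin r_M / pi)"
proof -
  have fb0: "\<bar>f_vf y\<bar> \<le> 41 * \<bar>y - pi/2\<bar>" for y by (rule fbound) (use pi_lt in \<open>auto simp: f_zero\<close>)
  have fb1: "\<bar>f_vf y\<bar> \<le> 41 * \<bar>y - pi\<bar>" for y by (rule fbound) (use pi_lt pi_gt_zero in \<open>auto simp: f_zero\<close>)
  obtain \<phi> where p: "\<phi> 0 = r" "\<And>s. pi/2 < \<phi> s \<and> \<phi> s < pi"
    "\<And>s. (\<phi> has_real_derivative f_vf (\<phi> s)) (at s)"
  proof -
    have "\<exists>\<phi>. \<phi> 0 = r \<and> (\<forall>s. pi/2 < \<phi> s \<and> \<phi> s < pi) \<and> (\<forall>s. (\<phi> has_real_derivative f_vf (\<phi> s)) (at s))"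
    proof (rule exist_pos[where C=41])
      fix y assume y: "pi/2 < y" "y < pi"
      show "f_vf y > 0" using f_pos2 y by auto
      show "f_vf y \<le> 41 * (y - pi/2)" using fb0[of y] y by auto
      show "f_vf y \<le> 41 * (pi - y)" using fb1[of y] y by auto
    qed (use r cont_f in auto)
    then show ?thesis using that by blast
  qed
  have sg: "1 * (\<phi> s * sin (\<phi> s)) > 0" for s
  proof -
    have "sin (\<phi> s) > 0" using p(2)[of s] pi_gt_zero by (intro sin_gt_zero) auto
    moreover have "\<phi> s > 0" using p(2)[of s] pi_gt_zero by linarith
    ultimately show ?thesis by simp
  qed
  have G: "G_fn r t = ln (1 * (\<phi> t * sin (\<phi> t))) - ln (1 * (r * sin r))"
    by (rule G_formula[OF p(1) p(3) sg t])
  have "\<phi> 0 \<le> \<phi> t"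
  proof (rule DERIV_nonneg_imp_nondecreasing[OF t])
    fix u show "\<exists>y. DERIV \<phi> u :> y \<and> 0 \<le> y" using p(3)[of u] f_pos2[of "\<phi> u"] p(2)[of u]
      by (intro exI[of _ "f_vf (\<phi> u)"]) auto
  qed
  hence ge: "r \<le> \<phi> t" using p(1) by simp
  define A where "A = \<phi> t * sin (\<phi> t)"
  define B where "B = r * sin r"
  define P where "P = r_M * sin r_M"
  have A: "A > 0" using sg[of t] unfolding A_def by simp
  have B: "B > 0" using sg[of 0] p(1) unfolding B_def by simp
  have P: "pi/2 < P" "P < 7 * pi / 12" using pM_bounds unfolding P_def by auto
  have AP: "A \<le> P" unfolding A_def P_def using p(2)[of t] by (intro p_le_max) auto
  have K1: "1 < 2 * P / pi" using P pi_gt_zero by (simp add: field_simps)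
  have G': "G_fn r t = ln A - ln B" unfolding G A_def B_def by simp
  have "ln A - ln B < ln (2 * P / pi)"
  proof (cases "r \<le> r_M")
    case True
    have Bh: "B > pi/2" unfolding B_def using p_gt_half[of r] r True by auto
    have "A / B \<le> P / B" using AP B by (simp add: divide_right_mono)
    also have "\<dots> < P / (pi/2)" using Bh P pi_gt_zero by (intro divide_strict_left_mono) auto
    also have "\<dots> = 2 * P / pi" by simp
    finally have "A / B < 2 * P / pi" .
    moreover have "0 < 2 * P / pi" using K1 by linarith
    moreover have "0 < A / B" using A B by simp
    ultimately have "ln (A / B) < ln (2 * P / pi)" by simp
    then show ?thesis using A B by (simp add: ln_div)
  next
    case False
    have "A \<le> B" unfolding A_def B_def using False ge p(2)[of t] by (intro p_dec_after) auto
    hence "ln A - ln B \<le> 0" using A B by simp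
    moreover have "ln (2 * P / pi) > 0" using K1 by (intro ln_gt_zero) auto
    ultimately show ?thesis by linarith
  qed
  then show ?thesis using G' unfolding P_def by (simp add: mult.assoc)
qed


theorem mainTheorem7:
  fixes \<delta>\<^sub>0 :: real
  assumes "0 < \<delta>\<^sub>0" and "\<delta>\<^sub>0 < pi / 2"
  shows "(\<forall>r \<in> {0..<pi + \<delta>\<^sub>0}. \<forall>t \<ge> 0.
            G_fn r t < ln (2 * r_M * sin r_M / pi))
         \<and> ln (2 * r_M * sin r_M / pi) < ln (7 / 6)"
proof -
  define K where "K = 2 * r_M * sin r_M / pi"
  have P: "pi/2 < r_M * sin r_M" "r_M * sin r_M < 7 * pi / 12" using pM_bounds by auto
  have K1: "1 < K" using P pi_gt_zero unfolding K_def by (simp add: field_simps)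
  have K2: "K < 7/6" using P pi_gt_zero unfolding K_def by (simp add: field_simps)
  have lnK: "0 < ln K" using K1 by (intro ln_gt_zero) auto
  have lnK2: "ln K < ln (7/6)" using K1 K2 by (intro ln_less_cancel_iff[THEN iffD2]) auto
  have "G_fn r t < ln K" if r: "0 \<le> r" "r < pi + \<delta>\<^sub>0" and t: "0 \<le> t" for r t
  proof -
    have r3: "r < 3/2*pi" using r assms by simp
    consider "r = 0" | "0 < r" "r < pi/2" | "r = pi/2" | "pi/2 < r" "r < pi" | "r = pi" | "pi < r"
      using r by linarith
    then show ?thesis
    proof cases
      case 1
      have "G_fn r t = t * g_fn 0" using G_const[OF f_zero(1) t] 1 by simp
      also have "\<dots> \<le> 0" using t by (simp add: g_fn_def)
      finally show ?thesis using lnK by linarith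
    next
      case 2 then show ?thesis using case1[OF 2 t] lnK by linarith
    next
      case 3
      have "G_fn r t = t * g_fn (pi/2)" using G_const[OF f_zero(2) t] 3 by metis
      also have "\<dots> = 0" by (simp add: g_fn_def)
      finally show ?thesis using lnK by linarith
    next
      case 4 then show ?thesis using case2[OF 4 t] unfolding K_def by simp
    next
      case 5
      have "G_fn r t = t * g_fn pi" using G_const[OF f_zero(3) t] 5 by metis
      also have "\<dots> \<le> 0" using t pi_gt_zero by (simp add: g_fn_def)
      finally show ?thesis using lnK by linarith
    next
      case 6 then show ?thesis using case3[OF 6 r3 t] lnK by linarith
    qed
  qed
  then show ?thesis using lnK2 unfolding K_def by auto
qed

end
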